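(* Fix an integer $k \ge 2$, $\mathbf{f} \in [0,1)^k\setminus\{\mathbf{0}\}$, $\mathbf{r}^1,\dots,\mathbf{r}^{n} \in \mathbb{R}^k$, and $\tau \geq 2k$. Then there exists a decomposition of $\Delta_k^\tau$ obtained by at most $2n(\tau+3)^2$ hyperplanes such that within each region, each of the functions $\boldsymbol{\mu}\mapsto\pi_{\mathbf{f},\boldsymbol{\mu}}(\mathbf{r}^j)$, $j=1,\dots,n$, is a fixed rational function given by the quotient of two affine linear functions of $\boldsymbol{\mu}$, where the denominator is a fixed function of $\boldsymbol{\mu}$ that is positive on $\Delta_k^\tau$.
   Context: $\Delta_k^\tau = \{\mathbf{x} \in \mathbb{R}^k: \mathbf{x}_1,\dots,\mathbf{x}_k \geq \frac{1}{\tau}, \sum_{i=1}^{k}\mathbf{x}_i=1\}$. $\mathbf{e}^i$ is the $i$-th standard basis vector of $\mathbb{R}^k$. For $\boldsymbol{\mu}\in\Delta_k^\tau$ define $\mathbf{a}^0 = \frac{\sum_{i=1}^{k}\boldsymbol{\mu}_i\mathbf{e}^i}{\sum_{i=1}^{k}\boldsymbol{\mu}_i\mathbf{f}_i}$, $\mathbf{a}^i = \frac{1}{\mathbf{f}_i-1}\mathbf{e}^i$ ($i=1,\dots,k$), and $\pi_{\mathbf{f},\boldsymbol{\mu}}(\mathbf{r}) = \min_{\mathbf{z} \in \mathbb{Z}^k} \max_{i=0, \ldots, k} \langle \mathbf{a}^i, \mathbf{r} + \mathbf{z}\rangle$ for $\mathbf{r}\in\mathbb{R}^k$. *)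

theory Defs
  imports "HOL-Analysis.Analysis"
begin

definition simplex_tau :: "real \<Rightarrow> (real^'k) set" where
  "simplex_tau \<tau> = {x. (\<forall>i. x $ i \<ge> 1 / \<tau>) \<and> (\<Sum>i\<in>UNIV. x $ i) = 1}"

definition std_basis :: "'k \<Rightarrow> real^'k" where
  "std_basis i = (\<chi> j. if j = i then 1 else 0)"

definition a_zero :: "real^'k \<Rightarrow> real^'k \<Rightarrow> real^'k" where
  "a_zero f \<mu> = (1 / (\<Sum>i\<in>UNIV. \<mu> $ i * f $ i)) *\<^sub>R (\<Sum>i\<in>UNIV. (\<mu> $ i) *\<^sub>R std_basis i)"

definition a_idx :: "real^'k \<Rightarrow> 'k \<Rightarrow> real^'k" where
  "a_idx f i = (1 / (f $ i - 1)) *\<^sub>R std_basis i"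

text \<open>pi_{f,mu}(r) = min over z in Z^k of max_{i=0..k} <a^i, r + z>
  (the minimum is rendered as the infimum over integer vectors z).\<close>
definition pi_fun :: "real^'k \<Rightarrow> real^'k \<Rightarrow> real^'k \<Rightarrow> real" where
  "pi_fun f \<mu> r =
     (INF z \<in> {z :: real^'k. \<forall>i. z $ i \<in> \<int>}.
        max (inner (a_zero f \<mu>) (r + z)) (Max ((\<lambda>i. inner (a_idx f i) (r + z)) ` UNIV)))"

text \<open>Region of the arrangement of the hyperplanes H = {(w,c)} (hyperplane {y. w.y = c})
  restricted to S that contains x: all points of S with the same sign vector as x.\<close>
definition arrangement_cell :: "((real^'k) \<times> real) set \<Rightarrow> (real^'k) set \<Rightarrow> real^'k \<Rightarrow> (real^'k) set" where
  "arrangement_cell H S x = {y \<in> S. \<forall>(w, c) \<in> H. sgn (inner w y - c) = sgn (inner w x - c)}"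

end

theory Submission
  imports Defs
begin


definition Kv :: "real^'k \<Rightarrow> real^'k \<Rightarrow> real \<Rightarrow> real^'k" where
  "Kv f \<rho> t = (\<chi> i. of_int \<lfloor>\<rho>$i + t*(1 - f$i)\<rfloor>)"
definition Km :: "real^'k \<Rightarrow> real^'k \<Rightarrow> real \<Rightarrow> real^'k" where
  "Km f \<rho> t = (\<chi> i. of_int (\<lceil>\<rho>$i + t*(1 - f$i)\<rceil> - 1))"
definition hh :: "real^'k \<Rightarrow> real^'k \<Rightarrow> real^'k \<Rightarrow> real \<Rightarrow> real" where
  "hh f \<rho> \<mu> t = inner \<mu> (\<rho> - Kv f \<rho> t - t *\<^sub>R f)"
definition Bs :: "real^'k \<Rightarrow> real^'k \<Rightarrow> real set" where
  "Bs f \<rho> = {0,1} \<union> (\<Union>i. {t. 0 \<le> t \<and> t \<le> 1 \<and> \<rho>$i + t*(1-f$i) \<in> \<int>})"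
definition vv :: "real^'k \<Rightarrow> real^'k \<Rightarrow> real \<Rightarrow> real^'k" where
  "vv f \<rho> t = \<rho> - Kv f \<rho> t - t *\<^sub>R f"
definition uu :: "real^'k \<Rightarrow> real^'k \<Rightarrow> real \<Rightarrow> real^'k" where
  "uu f \<rho> t = \<rho> - Km f \<rho> t - t *\<^sub>R f"
definition Ws :: "real^'k \<Rightarrow> real^'k \<Rightarrow> (real^'k) set" where
  "Ws f \<rho> = vv f \<rho> ` Bs f \<rho> \<union> uu f \<rho> ` Bs f \<rho>"

lemma Bi_sub:
  assumes "0 \<le> f$i" "f$i < 1"
  shows "{t. 0 \<le> t \<and> t \<le> 1 \<and> \<rho>$i + t*(1-f$i) \<in> \<int>} \<subseteq>
    {(of_int \<lfloor>\<rho>$i\<rfloor> - \<rho>$i)/(1-f$i), (of_int \<lfloor>\<rho>$i\<rfloor> + 1 - \<rho>$i)/(1-f$i)}"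
proof
  fix t assume "t \<in> {t. 0 \<le> t \<and> t \<le> 1 \<and> \<rho>$i + t*(1-f$i) \<in> \<int>}"
  then have t: "0 \<le> t" "t \<le> 1" "\<rho>$i + t*(1-f$i) \<in> \<int>" by auto
  then obtain m where m: "\<rho>$i + t*(1-f$i) = of_int m" by (auto elim: Ints_cases)
  have p: "1 - f$i > 0" using assms by simp
  have a1: "t*(1-f$i) \<ge> 0" using t p by simp
  have a2: "t*(1-f$i) \<le> 1" using t p assms by (intro mult_le_one) auto
  note a = a1 a2
  have "of_int m \<ge> \<rho>$i" "of_int m \<le> \<rho>$i + 1" using m a by auto
  then have m1: "m \<ge> \<lceil>\<rho>$i\<rceil>" by (simp add: ceiling_le_iff)
  have "m - 1 \<le> \<lfloor>\<rho>$i\<rfloor>" using \<open>of_int m \<le> \<rho>$i + 1\<close> by (simp add: le_floor_iff)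
  then have m2: "m \<le> \<lfloor>\<rho>$i\<rfloor> + 1" by simp
  have "\<lfloor>\<rho>$i\<rfloor> \<le> \<lceil>\<rho>$i\<rceil>" by (rule floor_le_ceiling)
  then have "m = \<lfloor>\<rho>$i\<rfloor> \<or> m = \<lfloor>\<rho>$i\<rfloor> + 1" using m1 m2 by linarith
  moreover have "t = (of_int m - \<rho>$i)/(1-f$i)" using m p by (simp add: field_simps)
  ultimately show "t \<in> {(of_int \<lfloor>\<rho>$i\<rfloor> - \<rho>$i)/(1-f$i), (of_int \<lfloor>\<rho>$i\<rfloor> + 1 - \<rho>$i)/(1-f$i)}"
    by auto
qed

lemma Bs_fin_card:
  fixes f \<rho> :: "real^'k"
  assumes "\<forall>i. 0 \<le> f$i \<and> f$i < 1"
  shows "finite (Bs f \<rho>) \<and> card (Bs f \<rho>) \<le> 2 + 2 * CARD('k)"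
proof -
  let ?A = "\<lambda>i. {t. 0 \<le> t \<and> t \<le> 1 \<and> \<rho>$i + t*(1-f$i) \<in> \<int>}"
  have fA: "finite (?A i)" and cA: "card (?A i) \<le> 2" for i
  proof -
    have s: "?A i \<subseteq> {(of_int \<lfloor>\<rho>$i\<rfloor> - \<rho>$i)/(1-f$i), (of_int \<lfloor>\<rho>$i\<rfloor> + 1 - \<rho>$i)/(1-f$i)}"
      using Bi_sub assms by blast
    show "finite (?A i)" using s finite_subset by blast
    have "card (?A i) \<le> card {(of_int \<lfloor>\<rho>$i\<rfloor> - \<rho>$i)/(1-f$i), (of_int \<lfloor>\<rho>$i\<rfloor> + 1 - \<rho>$i)/(1-f$i)}"
      by (rule card_mono[OF _ s]) simp
    also have "\<dots> \<le> 2" by (simp add: card_insert_le_m1)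
    finally show "card (?A i) \<le> 2" .
  qed
  have fU: "finite (\<Union>i. ?A i)" using fA by simp
  have "card (\<Union>i. ?A i) \<le> (\<Sum>i\<in>UNIV. card (?A i))" by (rule card_UN_le) simp
  also have "\<dots> \<le> (\<Sum>i\<in>(UNIV::'k set). 2)" by (rule sum_mono) (use cA in auto)
  finally have cU: "card (\<Union>i. ?A i) \<le> 2 * CARD('k)" by simp
  have "card (Bs f \<rho>) \<le> card {0,1::real} + card (\<Union>i. ?A i)"
    unfolding Bs_def by (rule card_Un_le)
  also have "\<dots> \<le> 2 + 2 * CARD('k)" using cU by simp
  finally show ?thesis using fU unfolding Bs_def by simp
qed



lemma inner_Kv_mono:
  fixes f \<rho> \<mu> :: "real^'k"
  assumes F: "\<forall>i. 0 \<le> f$i \<and> f$i < 1" and M: "\<forall>i. \<mu>$i \<ge> 0" and st: "s \<le> t"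
  shows "inner \<mu> (Kv f \<rho> s) \<le> inner \<mu> (Kv f \<rho> t)"
  unfolding inner_vec_def
proof (rule sum_mono)
  fix i :: 'k
  have "s*(1-f$i) \<le> t*(1-f$i)" using F st by (intro mult_right_mono) (auto simp: less_imp_le)
  then have "\<lfloor>\<rho>$i + s*(1-f$i)\<rfloor> \<le> \<lfloor>\<rho>$i + t*(1-f$i)\<rfloor>" by (intro floor_mono) simp
  then have "(Kv f \<rho> s)$i \<le> (Kv f \<rho> t)$i" by (simp add: Kv_def)
  then show "inner (\<mu>$i) ((Kv f \<rho> s)$i) \<le> inner (\<mu>$i) ((Kv f \<rho> t)$i)"
    using M by (simp add: mult_left_mono)
qed

lemma hh_expand: "hh f \<rho> \<mu> t = inner \<mu> \<rho> - inner \<mu> (Kv f \<rho> t) - t * inner \<mu> f"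
  by (simp add: hh_def inner_diff_right)

lemma L_mono:
  fixes f \<rho> \<mu> :: "real^'k"
  assumes F: "\<forall>i. 0 \<le> f$i \<and> f$i < 1" and M: "\<forall>i. \<mu>$i \<ge> 0" and S: "inner \<mu> f > 0"
    and st: "s < t"
  shows "hh f \<rho> \<mu> t < hh f \<rho> \<mu> s"
proof -
  have "inner \<mu> (Kv f \<rho> s) \<le> inner \<mu> (Kv f \<rho> t)" using inner_Kv_mono[OF F M] st by simp
  moreover have "s * inner \<mu> f < t * inner \<mu> f" using S st by simp
  ultimately show ?thesis unfolding hh_expand by linarith
qed

lemma L_mono_le:
  fixes f \<rho> \<mu> :: "real^'k"
  assumes F: "\<forall>i. 0 \<le> f$i \<and> f$i < 1" and M: "\<forall>i. \<mu>$i \<ge> 0" and S: "inner \<mu> f > 0"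
    and st: "s \<le> t"
  shows "hh f \<rho> \<mu> t \<le> hh f \<rho> \<mu> s"
  using L_mono[OF F M S, of s t \<rho>] st by (cases "s = t") auto

lemma L_shift:
  assumes "Kv f \<rho> s = Kv f \<rho> t"
  shows "hh f \<rho> \<mu> s = hh f \<rho> \<mu> t - (s - t) * inner \<mu> f"
  using assms unfolding hh_expand by (simp add: algebra_simps)

lemma L_neg:
  fixes f \<rho> \<mu> :: "real^'k"
  assumes F: "\<forall>i. 0 \<le> f$i \<and> f$i < 1" and M: "\<forall>i. \<mu>$i > 0" and s: "s < 0"
  shows "hh f \<rho> \<mu> s > 0"
  unfolding hh_def inner_vec_def
proof (rule sum_pos)
  fix i :: 'k
  let ?x = "\<rho>$i + s*(1-f$i)"
  have "of_int \<lfloor>?x\<rfloor> \<le> ?x" by (rule of_int_floor_le)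
  then have "(\<rho> - Kv f \<rho> s - s *\<^sub>R f)$i \<ge> - s" by (simp add: Kv_def algebra_simps)
  then have "(\<rho> - Kv f \<rho> s - s *\<^sub>R f)$i > 0" using s by linarith
  then show "0 < inner (\<mu>$i) ((\<rho> - Kv f \<rho> s - s *\<^sub>R f)$i)" using M by simp
qed auto

lemma L_one:
  fixes f \<rho> \<mu> :: "real^'k"
  assumes M: "\<forall>i. \<mu>$i \<ge> 0"
  shows "hh f \<rho> \<mu> 1 \<le> 0"
  unfolding hh_def inner_vec_def
proof (rule sum_nonpos)
  fix i :: 'k
  let ?x = "\<rho>$i + 1*(1-f$i)"
  have "?x < of_int \<lfloor>?x\<rfloor> + 1" by (rule real_of_int_floor_add_one_gt)
  then have "(\<rho> - Kv f \<rho> 1 - 1 *\<^sub>R f)$i \<le> 0" by (simp add: Kv_def algebra_simps)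
  then show "inner (\<mu>$i) ((\<rho> - Kv f \<rho> 1 - 1 *\<^sub>R f)$i) \<le> 0" using M
    by (simp add: mult_nonneg_nonpos)
qed

lemma in_Bs:
  assumes "0 \<le> b" "b \<le> 1" "\<rho>$i + b*(1-f$i) = of_int m"
  shows "b \<in> Bs f \<rho>"
proof -
  have "\<rho>$i + b*(1-f$i) \<in> \<int>" using assms(3) by simp
  then show ?thesis using assms(1,2) unfolding Bs_def by blast
qed

lemma L_const:
  fixes f \<rho> :: "real^'k"
  assumes F: "\<forall>i. 0 \<le> f$i \<and> f$i < 1" and st: "0 \<le> s" "s \<le> t" "t \<le> 1"
    and nb: "\<forall>b\<in>Bs f \<rho>. \<not> (s < b \<and> b \<le> t)"
  shows "Kv f \<rho> s = Kv f \<rho> t"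
proof -
  have "\<lfloor>\<rho>$i + s*(1-f$i)\<rfloor> = \<lfloor>\<rho>$i + t*(1-f$i)\<rfloor>" for i
  proof (rule ccontr)
    assume ne: "\<lfloor>\<rho>$i + s*(1-f$i)\<rfloor> \<noteq> \<lfloor>\<rho>$i + t*(1-f$i)\<rfloor>"
    have p: "1 - f$i > 0" using F by simp
    have "s*(1-f$i) \<le> t*(1-f$i)" using p st by (intro mult_right_mono) auto
    then have "\<lfloor>\<rho>$i + s*(1-f$i)\<rfloor> \<le> \<lfloor>\<rho>$i + t*(1-f$i)\<rfloor>" by (intro floor_mono) simp
    then have lt: "\<lfloor>\<rho>$i + s*(1-f$i)\<rfloor> < \<lfloor>\<rho>$i + t*(1-f$i)\<rfloor>" using ne by simp
    define m where "m = \<lfloor>\<rho>$i + t*(1-f$i)\<rfloor>"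
    have m1: "of_int m \<le> \<rho>$i + t*(1-f$i)" unfolding m_def by (rule of_int_floor_le)
    have m2: "\<rho>$i + s*(1-f$i) < of_int m" using lt unfolding m_def by (simp add: floor_less_iff)
    define b where "b = (of_int m - \<rho>$i)/(1-f$i)"
    have bx: "\<rho>$i + b*(1-f$i) = of_int m" using p unfolding b_def by (simp add: field_simps)
    have "s < b" using m2 p unfolding b_def by (simp add: field_simps)
    moreover have "b \<le> t" using m1 p unfolding b_def by (simp add: field_simps)
    ultimately have "b \<in> Bs f \<rho>" using st bx by (intro in_Bs) auto
    then show False using nb \<open>s < b\<close> \<open>b \<le> t\<close> by blast
  qed
  then show ?thesis by (simp add: Kv_def vec_eq_iff)
qed

lemma L_left:
  fixes f \<rho> :: "real^'k"
  assumes F: "\<forall>i. 0 \<le> f$i \<and> f$i < 1" and st: "0 \<le> t" "t < b" "b \<le> 1"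
    and nb: "\<forall>c\<in>Bs f \<rho>. \<not> (t < c \<and> c < b)"
  shows "Km f \<rho> b = Kv f \<rho> t"
proof -
  have "\<lceil>\<rho>$i + b*(1-f$i)\<rceil> - 1 = \<lfloor>\<rho>$i + t*(1-f$i)\<rfloor>" for i
  proof -
    have p: "1 - f$i > 0" using F by simp
    have "t*(1-f$i) < b*(1-f$i)" using p st by simp
    then have xl: "\<rho>$i + t*(1-f$i) < \<rho>$i + b*(1-f$i)" by simp
    have "of_int \<lfloor>\<rho>$i + t*(1-f$i)\<rfloor> \<le> \<rho>$i + t*(1-f$i)" by (rule of_int_floor_le)
    also note xl
    also have "\<rho>$i + b*(1-f$i) \<le> of_int \<lceil>\<rho>$i + b*(1-f$i)\<rceil>" by (rule le_of_int_ceiling)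
    finally have le1: "\<lfloor>\<rho>$i + t*(1-f$i)\<rfloor> \<le> \<lceil>\<rho>$i + b*(1-f$i)\<rceil> - 1" by linarith
    show ?thesis
    proof (rule ccontr)
      assume "\<lceil>\<rho>$i + b*(1-f$i)\<rceil> - 1 \<noteq> \<lfloor>\<rho>$i + t*(1-f$i)\<rfloor>"
      then have lt: "\<lfloor>\<rho>$i + t*(1-f$i)\<rfloor> < \<lceil>\<rho>$i + b*(1-f$i)\<rceil> - 1" using le1 by simp
      define m where "m = \<lceil>\<rho>$i + b*(1-f$i)\<rceil> - 1"
      have m1: "\<rho>$i + t*(1-f$i) < of_int m" using lt unfolding m_def by (simp add: floor_less_iff)
      have "m < \<lceil>\<rho>$i + b*(1-f$i)\<rceil>" unfolding m_def by simp
      then have m2: "of_int m < \<rho>$i + b*(1-f$i)" by (simp add: less_ceiling_iff)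
      define c where "c = (of_int m - \<rho>$i)/(1-f$i)"
      have cx: "\<rho>$i + c*(1-f$i) = of_int m" using p unfolding c_def by (simp add: field_simps)
      have "t < c" using m1 p unfolding c_def by (simp add: field_simps)
      moreover have "c < b" using m2 p unfolding c_def by (simp add: field_simps)
      ultimately have "c \<in> Bs f \<rho>" using st cx by (intro in_Bs) auto
      then show False using nb \<open>t < c\<close> \<open>c < b\<close> by blast
    qed
  qed
  then show ?thesis by (simp add: Kv_def Km_def vec_eq_iff)
qed



definition GG :: "real^'k \<Rightarrow> real^'k \<Rightarrow> real^'k \<Rightarrow> real" where
  "GG f \<mu> y = max (inner (a_zero f \<mu>) y) (Max ((\<lambda>i. inner (a_idx f i) y) ` UNIV))"

lemma pi_GG: "pi_fun f \<mu> r = (INF z \<in> {z :: real^'k. \<forall>i. z $ i \<in> \<int>}. GG f \<mu> (r + z))"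
  unfolding pi_fun_def GG_def ..

lemma sum_basis: "(\<Sum>i\<in>UNIV. (\<mu> $ i) *\<^sub>R std_basis i) = (\<mu>::real^'k)"
  by (simp add: vec_eq_iff sum_component std_basis_def if_distrib cong: if_cong)

lemma inner_a_zero: "inner (a_zero f \<mu>) y = inner \<mu> y / inner \<mu> f"
proof -
  have "(\<Sum>i\<in>UNIV. \<mu> $ i * f $ i) = inner \<mu> f" by (simp add: inner_vec_def)
  then show ?thesis unfolding a_zero_def sum_basis by simp
qed

lemma inner_a_idx: "inner (a_idx f i) y = y$i / (f$i - 1)"
proof -
  have e: "(\<lambda>j. (if j = i then 1 else 0) * y$j) = (\<lambda>j. if j = i then y$i else 0)" by auto
  have "inner (std_basis i) y = y$i"
    by (simp add: inner_vec_def std_basis_def) (simp only: e sum.delta finite_UNIV, simp)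
  then show ?thesis unfolding a_idx_def by simp
qed

lemma GG_le:
  fixes f \<mu> y :: "real^'k"
  assumes F: "\<forall>i. 0 \<le> f$i \<and> f$i < 1" and S: "inner \<mu> f > 0"
  shows "GG f \<mu> y \<le> t \<longleftrightarrow> inner \<mu> y \<le> t * inner \<mu> f \<and> (\<forall>i. t*(f$i-1) \<le> y$i)"
proof -
  have 1: "inner (a_zero f \<mu>) y \<le> t \<longleftrightarrow> inner \<mu> y \<le> t * inner \<mu> f"
    using S by (simp add: inner_a_zero pos_divide_le_eq)
  have 2: "inner (a_idx f i) y \<le> t \<longleftrightarrow> t*(f$i-1) \<le> y$i" for i
  proof -
    have "f$i - 1 < 0" using F by simp
    then show ?thesis by (simp add: inner_a_idx neg_divide_le_eq)
  qed
  have 3: "Max ((\<lambda>i. inner (a_idx f i) y) ` UNIV) \<le> t \<longleftrightarrow> (\<forall>i. inner (a_idx f i) y \<le> t)"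
    by (subst Max_le_iff) auto
  show ?thesis unfolding GG_def using 1 2 3 by simp
qed

lemma feas:
  fixes f \<mu> \<rho> z :: "real^'k"
  assumes F: "\<forall>i. 0 \<le> f$i \<and> f$i < 1" and S: "inner \<mu> f > 0" and M: "\<forall>i. \<mu>$i \<ge> 0"
    and z: "\<forall>i. z $ i \<in> \<int>" and le: "GG f \<mu> (\<rho> + z) \<le> t"
  shows "hh f \<rho> \<mu> t \<le> 0"
proof -
  have a: "inner \<mu> (\<rho> + z) \<le> t * inner \<mu> f" and b: "\<forall>i. t*(f$i-1) \<le> \<rho>$i + z$i"
    using le GG_le[OF F S] by auto
  have "- (Kv f \<rho> t)$i \<le> z$i" for i
  proof -
    obtain m where m: "z$i = of_int m" using z by (meson Ints_cases)
    have "of_int (-m) \<le> \<rho>$i + t*(1-f$i)" using b[rule_format, of i] m by (simp add: algebra_simps)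
    then have "-m \<le> \<lfloor>\<rho>$i + t*(1-f$i)\<rfloor>" by (simp only: le_floor_iff)
    then show ?thesis using m by (simp add: Kv_def)
  qed
  then have "inner \<mu> (- Kv f \<rho> t) \<le> inner \<mu> z"
    unfolding inner_vec_def
  proof (intro sum_mono)
    fix i
    have "\<mu>$i * (- Kv f \<rho> t $ i) \<le> \<mu>$i * z$i"
      using M \<open>\<And>i. - (Kv f \<rho> t)$i \<le> z$i\<close> by (intro mult_left_mono) auto
    then show "inner (\<mu>$i) ((- Kv f \<rho> t)$i) \<le> inner (\<mu>$i) (z$i)" by simp
  qed
  then show ?thesis using a unfolding hh_expand by (simp add: inner_add_right)
qed

lemma achieve:
  fixes f \<mu> \<rho> :: "real^'k"
  assumes F: "\<forall>i. 0 \<le> f$i \<and> f$i < 1" and S: "inner \<mu> f > 0"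
    and h: "hh f \<rho> \<mu> t \<le> 0"
  shows "GG f \<mu> (\<rho> + - Kv f \<rho> t) \<le> t" and "\<forall>i. (- Kv f \<rho> t) $ i \<in> \<int>"
proof -
  show "\<forall>i. (- Kv f \<rho> t) $ i \<in> \<int>" by (simp add: Kv_def)
  have "inner \<mu> (\<rho> + - Kv f \<rho> t) \<le> t * inner \<mu> f" using h unfolding hh_expand
    by (simp add: inner_add_right inner_diff_right)
  moreover have "t*(f$i-1) \<le> (\<rho> + - Kv f \<rho> t)$i" for i
  proof -
    have "of_int \<lfloor>\<rho>$i + t*(1-f$i)\<rfloor> \<le> \<rho>$i + t*(1-f$i)" by (rule of_int_floor_le)
    then show ?thesis by (simp add: Kv_def algebra_simps)
  qed
  ultimately show "GG f \<mu> (\<rho> + - Kv f \<rho> t) \<le> t" using GG_le[OF F S] by auto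
qed

lemma L_G:
  fixes f \<mu> \<rho> :: "real^'k"
  assumes F: "\<forall>i. 0 \<le> f$i \<and> f$i < 1" and S: "inner \<mu> f > 0" and M: "\<forall>i. \<mu>$i \<ge> 0"
    and h: "hh f \<rho> \<mu> t \<le> 0" and hs: "\<forall>s<t. hh f \<rho> \<mu> s > 0"
  shows "pi_fun f \<mu> \<rho> = t"
proof -
  let ?Z = "{z :: real^'k. \<forall>i. z $ i \<in> \<int>}"
  have ge: "t \<le> GG f \<mu> (\<rho> + z)" if "z \<in> ?Z" for z
  proof (rule ccontr)
    assume "\<not> t \<le> GG f \<mu> (\<rho> + z)"
    then have "GG f \<mu> (\<rho> + z) < t" by simp
    moreover have "hh f \<rho> \<mu> (GG f \<mu> (\<rho> + z)) \<le> 0"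
      using feas[OF F S M, of z \<rho>] that by auto
    ultimately show False using hs by force
  qed
  have z0: "- Kv f \<rho> t \<in> ?Z" and le: "GG f \<mu> (\<rho> + - Kv f \<rho> t) \<le> t"
    using achieve[OF F S h] by auto
  have eq: "GG f \<mu> (\<rho> + - Kv f \<rho> t) = t" using ge[OF z0] le by simp
  have mem: "t \<in> (\<lambda>z. GG f \<mu> (\<rho> + z)) ` ?Z" using imageI[OF z0, of "\<lambda>z. GG f \<mu> (\<rho> + z)"] eq by simp
  show ?thesis unfolding pi_GG
    by (rule cInf_eq_minimum[OF mem]) (use ge in auto)
qed



lemma L_exist:
  fixes f \<rho> \<mu> :: "real^'k"
  assumes F: "\<forall>i. 0 \<le> f$i \<and> f$i < 1" and M: "\<forall>i. \<mu>$i > 0" and S: "inner \<mu> f > 0"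
  shows "\<exists>t. hh f \<rho> \<mu> t \<le> 0 \<and> (\<forall>s<t. hh f \<rho> \<mu> s > 0) \<and> 0 \<le> t \<and> t \<le> 1"
proof -
  define T where "T = {t. hh f \<rho> \<mu> t \<le> 0}"
  have M': "\<forall>i. \<mu>$i \<ge> 0" using M by (simp add: less_imp_le)
  have oneT: "1 \<in> T" unfolding T_def using L_one[OF M'] by simp
  have Tpos: "\<And>x. x \<in> T \<Longrightarrow> 0 \<le> x" unfolding T_def using L_neg[OF F M, of _ \<rho>] by (metis linorder_not_le mem_Collect_eq)
  have bdd: "bdd_below T" using Tpos by (auto simp: bdd_below_def)
  have ne: "T \<noteq> {}" using oneT by auto
  define t where "t = Inf T"
  have t1: "t \<le> 1" unfolding t_def using cInf_lower[OF oneT bdd] .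
  have t0: "0 \<le> t" unfolding t_def using Tpos ne by (intro cInf_greatest) auto
  have below: "\<forall>s<t. hh f \<rho> \<mu> s > 0"
  proof (intro allI impI)
    fix s assume "s < t"
    show "hh f \<rho> \<mu> s > 0"
    proof (rule ccontr)
      assume "\<not> hh f \<rho> \<mu> s > 0"
      then have "s \<in> T" unfolding T_def by simp
      then have "t \<le> s" unfolding t_def using bdd by (rule cInf_lower)
      then show False using \<open>s < t\<close> by simp
    qed
  qed
  have ht: "hh f \<rho> \<mu> t \<le> 0"
  proof (rule ccontr)
    assume "\<not> hh f \<rho> \<mu> t \<le> 0"
    then have hpos: "hh f \<rho> \<mu> t > 0" by simp
    have "t \<noteq> 1" using hpos oneT unfolding T_def by auto
    then have tl1: "t < 1" using t1 by simp
    define Bg where "Bg = {b \<in> Bs f \<rho>. t < b}"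
    have fB: "finite Bg" unfolding Bg_def using Bs_fin_card[OF F, of \<rho>] by simp
    have oneB: "1 \<in> Bg" unfolding Bg_def Bs_def using tl1 by simp
    define c where "c = Min Bg"
    have cB: "c \<in> Bg" unfolding c_def using fB oneB by (intro Min_in) auto
    have cle: "\<And>b. b \<in> Bg \<Longrightarrow> c \<le> b" unfolding c_def using fB by simp
    have tc: "t < c" using cB unfolding Bg_def by simp
    have c1: "c \<le> 1" using cle[OF oneB] .
    define \<epsilon> where "\<epsilon> = min (c - t) (hh f \<rho> \<mu> t / inner \<mu> f)"
    have ep: "\<epsilon> > 0" unfolding \<epsilon>_def using tc hpos S by simp
    have "Inf T < t + \<epsilon>" using ep unfolding t_def by simp
    then obtain s where sT: "s \<in> T" and ss: "s < t + \<epsilon>" using cInf_lessD[OF ne] by blast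
    have ts: "t \<le> s" unfolding t_def using sT bdd by (rule cInf_lower)
    have sc: "s < c" using ss \<epsilon>_def by simp
    have nb: "\<forall>b\<in>Bs f \<rho>. \<not> (t < b \<and> b \<le> s)"
    proof (intro ballI notI)
      fix b assume "b \<in> Bs f \<rho>" "t < b \<and> b \<le> s"
      then have "b \<in> Bg" unfolding Bg_def by simp
      then have "c \<le> b" by (rule cle)
      then show False using \<open>t < b \<and> b \<le> s\<close> sc by simp
    qed
    have K: "Kv f \<rho> s = Kv f \<rho> t" using L_const[OF F t0 ts _ nb] sc c1 by simp
    have e1: "(s - t) * inner \<mu> f < \<epsilon> * inner \<mu> f" using ss S by simp
    have e2: "\<epsilon> * inner \<mu> f \<le> hh f \<rho> \<mu> t" using S unfolding \<epsilon>_def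
      by (simp add: min_def pos_le_divide_eq)
    have "hh f \<rho> \<mu> s = hh f \<rho> \<mu> t - (s - t) * inner \<mu> f" using L_shift[OF K] .
    then have "hh f \<rho> \<mu> s > 0" using e1 e2 by linarith
    then show False using sT unfolding T_def by simp
  qed
  show ?thesis using ht below t0 t1 by blast
qed



lemma sgn_same:
  fixes x y :: real
  assumes "sgn x = sgn y"
  shows "(x \<le> 0 \<longleftrightarrow> y \<le> 0) \<and> (x < 0 \<longleftrightarrow> y < 0) \<and> (0 < x \<longleftrightarrow> 0 < y) \<and> (0 \<le> x \<longleftrightarrow> 0 \<le> y)"
  using assms by (auto simp: sgn_if split: if_splits)

lemma hh_vv: "hh f \<rho> \<mu> t = inner (vv f \<rho> t) \<mu>"
  by (simp add: hh_def vv_def inner_commute)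

lemma hh_uu: "Kv f \<rho> s = Km f \<rho> t \<Longrightarrow> hh f \<rho> \<mu> s = inner (uu f \<rho> t) \<mu> + (t - s) * inner \<mu> f"
  by (simp add: hh_def uu_def inner_diff_right inner_commute algebra_simps)

lemma hh_q: "Kv f \<rho> s = Kv f \<rho> t \<Longrightarrow> hh f \<rho> \<mu> s = inner \<mu> (\<rho> - Kv f \<rho> t) - s * inner \<mu> f"
  by (simp add: hh_def inner_diff_right)

lemma L_cell:
  fixes f \<rho> \<mu>0 :: "real^'k"
  assumes F: "\<forall>i. 0 \<le> f$i \<and> f$i < 1" and M0: "\<forall>i. \<mu>0$i > 0" and S0: "inner \<mu>0 f > 0"
  shows "\<exists>p p0. \<forall>\<mu>. (\<forall>i. \<mu>$i > 0) \<and> inner \<mu> f > 0 \<and>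
            (\<forall>w\<in>Ws f \<rho>. sgn (inner w \<mu>) = sgn (inner w \<mu>0)) \<longrightarrow>
            pi_fun f \<mu> \<rho> = (inner p \<mu> + p0) / (inner f \<mu> + 0)"
proof -
  let ?B = "Bs f \<rho>"
  have fB: "finite ?B" using Bs_fin_card[OF F, of \<rho>] by simp
  have B01: "0 \<in> ?B" "1 \<in> ?B" unfolding Bs_def by auto
  have M0': "\<forall>i. \<mu>0$i \<ge> 0" using M0 by (simp add: less_imp_le)
  obtain t0 where h0: "hh f \<rho> \<mu>0 t0 \<le> 0" and hs0: "\<forall>s<t0. hh f \<rho> \<mu>0 s > 0"
    and t00: "0 \<le> t0" and t01: "t0 \<le> 1"
    using L_exist[OF F M0 S0, of \<rho>] by blast
  have vW: "vv f \<rho> b \<in> Ws f \<rho>" if "b \<in> ?B" for b using that unfolding Ws_def by simp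
  have uW: "uu f \<rho> b \<in> Ws f \<rho>" if "b \<in> ?B" for b using that unfolding Ws_def by simp
  have amax: "\<exists>a. a \<in> ?B \<and> 0 \<le> a \<and> a < t0 \<and> (\<forall>b\<in>?B. b < t0 \<longrightarrow> b \<le> a)" if "0 < t0"
  proof -
    let ?A = "{b \<in> ?B. b < t0}"
    have fA: "finite ?A" using fB by simp
    have "0 \<in> ?A" using B01 that by simp
    then have ne: "?A \<noteq> {}" by auto
    have "Max ?A \<in> ?A" using fA ne by (rule Max_in)
    moreover have "0 \<le> Max ?A" using fA \<open>0 \<in> ?A\<close> by (rule Max_ge)
    moreover have "\<forall>b\<in>?B. b < t0 \<longrightarrow> b \<le> Max ?A" using fA by simp
    ultimately show ?thesis by blast
  qed
  show ?thesis
  proof (cases "t0 \<in> ?B")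
    case True
    show ?thesis
    proof (intro exI allI impI)
      fix \<mu> :: "real^'k"
      assume A: "(\<forall>i. \<mu>$i > 0) \<and> inner \<mu> f > 0 \<and> (\<forall>w\<in>Ws f \<rho>. sgn (inner w \<mu>) = sgn (inner w \<mu>0))"
      then have M: "\<forall>i. \<mu>$i > 0" and S: "inner \<mu> f > 0"
        and SG: "\<And>w. w \<in> Ws f \<rho> \<Longrightarrow> sgn (inner w \<mu>) = sgn (inner w \<mu>0)" by auto
      have M': "\<forall>i. \<mu>$i \<ge> 0" using M by (simp add: less_imp_le)
      have ht: "hh f \<rho> \<mu> t0 \<le> 0"
        using sgn_same[OF SG[OF vW[OF True]]] h0 unfolding hh_vv by simp
      have hs: "\<forall>s<t0. hh f \<rho> \<mu> s > 0"
      proof (cases "t0 = 0")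
        case True
        then show ?thesis using L_neg[OF F M] by simp
      next
        case False
        then obtain a where aB: "a \<in> ?B" and a0: "0 \<le> a" and at: "a < t0"
          and amx: "\<forall>b\<in>?B. b < t0 \<longrightarrow> b \<le> a" using amax t00 by force
        have KL: "Kv f \<rho> s = Km f \<rho> t0" if "a \<le> s" "s < t0" for s
        proof (rule L_left[OF F _ that(2) t01, symmetric])
          show "0 \<le> s" using a0 that by simp
          show "\<forall>c\<in>?B. \<not> (s < c \<and> c < t0)" using amx that by force
        qed
        let ?U0 = "inner (uu f \<rho> t0) \<mu>0"
        have U0: "?U0 \<ge> 0"
        proof (rule ccontr)
          assume "\<not> ?U0 \<ge> 0"
          then have neg: "?U0 < 0" by simp
          define s where "s = max a (t0 + ?U0 / (2 * inner \<mu>0 f))"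
          have "?U0 / (2 * inner \<mu>0 f) < 0" using neg S0 by (simp add: divide_neg_pos)
          then have st: "s < t0" unfolding s_def using at by simp
          have as: "a \<le> s" unfolding s_def by simp
          have "t0 - s \<le> - ?U0 / (2 * inner \<mu>0 f)" unfolding s_def by simp
          then have "(t0 - s) * inner \<mu>0 f \<le> (- ?U0 / (2 * inner \<mu>0 f)) * inner \<mu>0 f"
            using S0 by (intro mult_right_mono) auto
          also have "\<dots> = - ?U0 / 2" using S0 by (simp add: field_simps)
          finally have "hh f \<rho> \<mu>0 s \<le> ?U0 / 2" using hh_uu[OF KL[OF as st], of \<mu>0] by simp
          then show False using hs0 st neg by force
        qed
        have U: "inner (uu f \<rho> t0) \<mu> \<ge> 0" using sgn_same[OF SG[OF uW[OF True]]] U0 by simp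
        show ?thesis
        proof (intro allI impI)
          fix s assume "s < t0"
          define s' where "s' = max s a"
          have as': "a \<le> s'" "s' < t0" unfolding s'_def using at \<open>s < t0\<close> by auto
          have "hh f \<rho> \<mu> s' = inner (uu f \<rho> t0) \<mu> + (t0 - s') * inner \<mu> f"
            using hh_uu[OF KL[OF as']] .
          moreover have "(t0 - s') * inner \<mu> f > 0" using as' S by simp
          ultimately have "hh f \<rho> \<mu> s' > 0" using U by linarith
          moreover have "hh f \<rho> \<mu> s' \<le> hh f \<rho> \<mu> s"
            using L_mono_le[OF F M' S] unfolding s'_def by simp
          ultimately show "hh f \<rho> \<mu> s > 0" by linarith
        qed
      qed
      have "pi_fun f \<mu> \<rho> = t0" using L_G[OF F S M' ht hs] .
      also have "t0 = (inner (t0 *\<^sub>R f) \<mu> + 0) / (inner f \<mu> + 0)"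
        using S by (simp add: inner_commute)
      finally show "pi_fun f \<mu> \<rho> = (inner (t0 *\<^sub>R f) \<mu> + 0) / (inner f \<mu> + 0)" .
    qed
  next
    case False
    have tpos: "0 < t0" using False B01 t00 by (cases "t0 = 0") auto
    have tl1: "t0 < 1" using False B01 t01 by (cases "t0 = 1") auto
    obtain a where aB: "a \<in> ?B" and a0: "0 \<le> a" and at: "a < t0"
      and amx: "\<forall>b\<in>?B. b < t0 \<longrightarrow> b \<le> a" using amax tpos by blast
    let ?C = "{b \<in> ?B. t0 < b}"
    have fC: "finite ?C" using fB by simp
    have oneC: "1 \<in> ?C" using B01 tl1 by simp
    define c where "c = Min ?C"
    have cC: "c \<in> ?C" unfolding c_def using fC oneC by (intro Min_in) auto
    have cmn: "\<forall>b\<in>?B. t0 < b \<longrightarrow> c \<le> b" unfolding c_def using fC by simp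
    have tc: "t0 < c" using cC by simp
    have cB: "c \<in> ?B" using cC by simp
    have c1: "c \<le> 1" using cmn B01 tl1 by simp
    define q where "q = \<rho> - Kv f \<rho> t0"
    have Kc: "Kv f \<rho> s = Kv f \<rho> t0" if "a \<le> s" "s < c" for s
    proof (cases "s \<le> t0")
      case True
      show ?thesis
      proof (rule L_const[OF F _ True t01])
        show "0 \<le> s" using a0 that by simp
        show "\<forall>b\<in>?B. \<not> (s < b \<and> b \<le> t0)"
        proof (intro ballI notI)
          fix b assume bB: "b \<in> ?B" and "s < b \<and> b \<le> t0"
          then have "b \<noteq> t0" using False by auto
          then have "b \<le> a" using amx bB \<open>s < b \<and> b \<le> t0\<close> by simp
          then show False using that \<open>s < b \<and> b \<le> t0\<close> by simp
        qed
      qed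
    next
      case nf: False
      show ?thesis
      proof (rule L_const[OF F t00 _ _, symmetric])
        show "t0 \<le> s" using nf by simp
        show "s \<le> 1" using that c1 by simp
        show "\<forall>b\<in>?B. \<not> (t0 < b \<and> b \<le> s)" using cmn that by force
      qed
    qed
    have Kmc: "Km f \<rho> c = Kv f \<rho> t0"
      using L_left[OF F t00 tc c1] cmn by force
    have hq: "hh f \<rho> \<nu> s = inner \<nu> q - s * inner \<nu> f" if "a \<le> s" "s < c" for \<nu> s
      unfolding q_def using hh_q[OF Kc[OF that]] .
    have vva: "vv f \<rho> a = q - a *\<^sub>R f" unfolding vv_def q_def using Kc[of a] at tc by simp
    have uuc: "uu f \<rho> c = q - c *\<^sub>R f" unfolding uu_def q_def Kmc by simp
    have q0: "inner \<mu>0 q = t0 * inner \<mu>0 f"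
    proof (rule ccontr)
      assume ne: "inner \<mu>0 q \<noteq> t0 * inner \<mu>0 f"
      have "inner \<mu>0 q \<le> t0 * inner \<mu>0 f" using h0 hq[of t0 \<mu>0] at tc by simp
      then have lt: "inner \<mu>0 q < t0 * inner \<mu>0 f" using ne by simp
      define D where "D = t0 * inner \<mu>0 f - inner \<mu>0 q"
      have Dp: "D > 0" using lt D_def by simp
      define s where "s = max a (t0 - D / (2 * inner \<mu>0 f))"
      have "D / (2 * inner \<mu>0 f) > 0" using Dp S0 by simp
      then have st: "s < t0" unfolding s_def using at by simp
      have as: "a \<le> s" unfolding s_def by simp
      have "t0 - s \<le> D / (2 * inner \<mu>0 f)" unfolding s_def by simp
      then have "(t0 - s) * inner \<mu>0 f \<le> (D / (2 * inner \<mu>0 f)) * inner \<mu>0 f"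
        using S0 by (intro mult_right_mono) auto
      also have "\<dots> = D / 2" using S0 by (simp add: field_simps)
      finally have "(t0 - s) * inner \<mu>0 f \<le> D / 2" .
      moreover have "hh f \<rho> \<mu>0 s = inner \<mu>0 q - s * inner \<mu>0 f" using hq[OF as] st tc by simp
      ultimately have "hh f \<rho> \<mu>0 s \<le> - D / 2" unfolding D_def by (simp add: algebra_simps)
      then show False using hs0 st Dp by force
    qed
    have va0: "inner (vv f \<rho> a) \<mu>0 > 0"
      unfolding vva using q0 at S0 by (simp add: inner_diff_left inner_commute algebra_simps)
    have uc0: "inner (uu f \<rho> c) \<mu>0 < 0"
      unfolding uuc using q0 tc S0 by (simp add: inner_diff_left inner_commute algebra_simps)
    show ?thesis
    proof (intro exI allI impI)
      fix \<mu> :: "real^'k"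
      assume A: "(\<forall>i. \<mu>$i > 0) \<and> inner \<mu> f > 0 \<and> (\<forall>w\<in>Ws f \<rho>. sgn (inner w \<mu>) = sgn (inner w \<mu>0))"
      then have M: "\<forall>i. \<mu>$i > 0" and S: "inner \<mu> f > 0"
        and SG: "\<And>w. w \<in> Ws f \<rho> \<Longrightarrow> sgn (inner w \<mu>) = sgn (inner w \<mu>0)" by auto
      have M': "\<forall>i. \<mu>$i \<ge> 0" using M by (simp add: less_imp_le)
      have va: "inner (vv f \<rho> a) \<mu> > 0" using sgn_same[OF SG[OF vW[OF aB]]] va0 by simp
      have uc: "inner (uu f \<rho> c) \<mu> < 0" using sgn_same[OF SG[OF uW[OF cB]]] uc0 by simp
      define tm where "tm = inner \<mu> q / inner \<mu> f"
      have "a * inner \<mu> f < inner \<mu> q" using va unfolding vva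
        by (simp add: inner_diff_left inner_diff_right inner_commute)
      then have atm: "a < tm" unfolding tm_def using S by (simp add: pos_less_divide_eq)
      have "inner \<mu> q < c * inner \<mu> f" using uc unfolding uuc
        by (simp add: inner_diff_left inner_diff_right inner_commute)
      then have tmc: "tm < c" unfolding tm_def using S by (simp add: pos_divide_less_eq)
      have htm: "hh f \<rho> \<mu> tm \<le> 0" using hq[of tm \<mu>] atm tmc S unfolding tm_def by simp
      have hs: "\<forall>s<tm. hh f \<rho> \<mu> s > 0"
      proof (intro allI impI)
        fix s assume "s < tm"
        define s' where "s' = max s a"
        have as': "a \<le> s'" "s' < tm" unfolding s'_def using atm \<open>s < tm\<close> by auto
        have "hh f \<rho> \<mu> s' = inner \<mu> q - s' * inner \<mu> f" using hq[of s' \<mu>] as' tmc by simp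
        moreover have "s' * inner \<mu> f < inner \<mu> q" using as' S unfolding tm_def
          by (simp add: pos_less_divide_eq)
        ultimately have "hh f \<rho> \<mu> s' > 0" by linarith
        moreover have "hh f \<rho> \<mu> s' \<le> hh f \<rho> \<mu> s"
          using L_mono_le[OF F M' S] unfolding s'_def by simp
        ultimately show "hh f \<rho> \<mu> s > 0" by linarith
      qed
      have "pi_fun f \<mu> \<rho> = tm" using L_G[OF F S M' htm hs] .
      then show "pi_fun f \<mu> \<rho> = (inner q \<mu> + 0) / (inner f \<mu> + 0)"
        unfolding tm_def by (simp add: inner_commute)
    qed
  qed
qed



theorem proposition2:
  fixes f :: "real^'k" and r :: "nat \<Rightarrow> real^'k" and n :: nat and \<tau> :: real
  assumes "CARD('k) \<ge> 2"
    and "\<forall>i. 0 \<le> f $ i \<and> f $ i < 1" and "f \<noteq> 0"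
    and "\<tau> \<ge> 2 * real CARD('k)"
  shows "\<exists>(d :: real^'k) (d0 :: real) (H :: ((real^'k) \<times> real) set).
           (\<forall>\<mu> \<in> simplex_tau \<tau>. inner d \<mu> + d0 > 0) \<and>
           finite H \<and> (\<forall>(w, c) \<in> H. w \<noteq> 0) \<and>
           real (card H) \<le> 2 * real n * (\<tau> + 3)^2 \<and>
           (\<forall>\<mu>0 \<in> simplex_tau \<tau>. \<forall>j \<in> {1..n}.
              \<exists>(p :: real^'k) (p0 :: real).
                \<forall>\<mu> \<in> arrangement_cell H (simplex_tau \<tau>) \<mu>0.
                  pi_fun f \<mu> (r j) = (inner p \<mu> + p0) / (inner d \<mu> + d0))"
proof -
  note F = assms(2)
  have tpos: "\<tau> > 0" using assms(1,4) by simp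
  have simpM: "\<forall>i. \<mu>$i > 0" if "\<mu> \<in> simplex_tau \<tau>" for \<mu> :: "real^'k"
  proof
    fix i
    have "\<mu>$i \<ge> 1/\<tau>" using that unfolding simplex_tau_def by simp
    moreover have "1/\<tau> > 0" using tpos by simp
    ultimately show "\<mu>$i > 0" by linarith
  qed
  obtain i0 where i0: "f$i0 \<noteq> 0" using assms(3) by (metis vec_eq_iff zero_index)
  have simpS: "inner \<mu> f > 0" if "\<forall>i. \<mu>$i > 0" for \<mu> :: "real^'k"
  proof -
    have "0 < (\<Sum>i\<in>UNIV. \<mu>$i * f$i)"
    proof (rule sum_pos2[of UNIV i0])
      show "0 < \<mu>$i0 * f$i0" using that F i0 by (metis mult_pos_pos order_le_less)
      show "\<And>i. i \<in> UNIV \<Longrightarrow> 0 \<le> \<mu>$i * f$i" using that F by (simp add: less_imp_le)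
    qed auto
    then show ?thesis by (simp add: inner_vec_def)
  qed
  define H where "H = (\<Union>j\<in>{1..n}. (\<lambda>w. (w, 0::real)) ` {w \<in> Ws f (r j). w \<noteq> 0})"
  have fW: "finite (Ws f \<rho>)" and cW: "card (Ws f \<rho>) \<le> 4 + 4 * CARD('k)" for \<rho>
  proof -
    have fb: "finite (Bs f \<rho>)" and cb: "card (Bs f \<rho>) \<le> 2 + 2 * CARD('k)"
      using Bs_fin_card[OF F] by auto
    show "finite (Ws f \<rho>)" unfolding Ws_def using fb by simp
    have "card (Ws f \<rho>) \<le> card (vv f \<rho> ` Bs f \<rho>) + card (uu f \<rho> ` Bs f \<rho>)"
      unfolding Ws_def by (rule card_Un_le)
    also have "\<dots> \<le> card (Bs f \<rho>) + card (Bs f \<rho>)" by (intro add_mono card_image_le fb)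
    finally show "card (Ws f \<rho>) \<le> 4 + 4 * CARD('k)" using cb by simp
  qed
  have finH: "finite H" unfolding H_def using fW by simp
  have "card H \<le> (\<Sum>j\<in>{1..n}. card ((\<lambda>w. (w, 0::real)) ` {w \<in> Ws f (r j). w \<noteq> 0}))"
    unfolding H_def by (rule card_UN_le) simp
  also have "\<dots> \<le> (\<Sum>j\<in>{1..n}. 4 + 4 * CARD('k))"
  proof (rule sum_mono)
    fix j
    have "card ((\<lambda>w. (w, 0::real)) ` {w \<in> Ws f (r j). w \<noteq> 0}) \<le> card {w \<in> Ws f (r j). w \<noteq> 0}"
      by (rule card_image_le) (use fW in simp)
    also have "\<dots> \<le> card (Ws f (r j))" by (rule card_mono) (use fW in auto)
    finally show "card ((\<lambda>w. (w, 0::real)) ` {w \<in> Ws f (r j). w \<noteq> 0}) \<le> 4 + 4 * CARD('k)"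
      using cW by (meson le_trans)
  qed
  finally have cH: "card H \<le> n * (4 + 4 * CARD('k))" by simp
  have cHr: "real (card H) \<le> 2 * real n * (\<tau> + 3)^2"
  proof -
    have "real (card H) \<le> real (n * (4 + 4 * CARD('k)))" using cH by (simp only: of_nat_le_iff)
    also have "\<dots> = real n * (4 + 4 * real CARD('k))" by simp
    finally have c1: "real (card H) \<le> real n * (4 + 4 * real CARD('k))" .
    moreover have "(2 * real CARD('k) + 3)^2 \<le> (\<tau> + 3)^2"
      using assms(4) by (intro power_mono) auto
    moreover have "4 + 4 * real CARD('k) \<le> 2 * (2 * real CARD('k) + 3)^2"
      by (simp add: power2_eq_square algebra_simps)
    ultimately have "4 + 4 * real CARD('k) \<le> 2 * (\<tau> + 3)^2" by linarith
    then have "real n * (4 + 4 * real CARD('k)) \<le> real n * (2 * (\<tau> + 3)^2)"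
      by (rule mult_left_mono) simp
    then have "real (card H) \<le> real n * (2 * (\<tau> + 3)^2)" using c1 by linarith
    then show ?thesis by simp
  qed
  show ?thesis
  proof (rule exI[of _ f], rule exI[of _ "0::real"], rule exI[of _ H], intro conjI)
    show "\<forall>\<mu>\<in>simplex_tau \<tau>. 0 < inner f \<mu> + 0"
      using simpM simpS by (simp add: inner_commute)
    show "finite H" by (rule finH)
    show "\<forall>(w, c)\<in>H. w \<noteq> 0" unfolding H_def by auto
    show "real (card H) \<le> 2 * real n * (\<tau> + 3)^2" by (rule cHr)
    show "\<forall>\<mu>0\<in>simplex_tau \<tau>. \<forall>j\<in>{1..n}. \<exists>p p0. \<forall>\<mu>\<in>arrangement_cell H (simplex_tau \<tau>) \<mu>0.
            pi_fun f \<mu> (r j) = (inner p \<mu> + p0) / (inner f \<mu> + 0)"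
    proof (intro ballI)
      fix \<mu>0 :: "real^'k" and j assume \<mu>0: "\<mu>0 \<in> simplex_tau \<tau>" and j: "j \<in> {1..n}"
      obtain p p0 where pp: "\<And>\<mu>. (\<forall>i. \<mu>$i > 0) \<and> inner \<mu> f > 0 \<and>
            (\<forall>w\<in>Ws f (r j). sgn (inner w \<mu>) = sgn (inner w \<mu>0)) \<Longrightarrow>
            pi_fun f \<mu> (r j) = (inner p \<mu> + p0) / (inner f \<mu> + 0)"
        using L_cell[OF F simpM[OF \<mu>0] simpS[OF simpM[OF \<mu>0]], of "r j"] by blast
      show "\<exists>p p0. \<forall>\<mu>\<in>arrangement_cell H (simplex_tau \<tau>) \<mu>0.
            pi_fun f \<mu> (r j) = (inner p \<mu> + p0) / (inner f \<mu> + 0)"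
      proof (intro exI ballI)
        fix \<mu> :: "real^'k" assume mc: "\<mu> \<in> arrangement_cell H (simplex_tau \<tau>) \<mu>0"
        then have \<mu>S: "\<mu> \<in> simplex_tau \<tau>" unfolding arrangement_cell_def by simp
        have sg: "sgn (inner w \<mu>) = sgn (inner w \<mu>0)" if "w \<in> Ws f (r j)" for w
        proof (cases "w = 0")
          case True then show ?thesis by simp
        next
          case False
          then have "(w, 0) \<in> H" unfolding H_def using that j by blast
          moreover have "\<forall>x\<in>H. (case x of (w, c) \<Rightarrow> sgn (inner w \<mu> - c) = sgn (inner w \<mu>0 - c))"
            using mc unfolding arrangement_cell_def by blast
          ultimately have "(case (w, 0::real) of (w, c) \<Rightarrow> sgn (inner w \<mu> - c) = sgn (inner w \<mu>0 - c))"
            by (rule bspec[rotated])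
          then show ?thesis by simp
        qed
        show "pi_fun f \<mu> (r j) = (inner p \<mu> + p0) / (inner f \<mu> + 0)"
          using pp simpM[OF \<mu>S] simpS[OF simpM[OF \<mu>S]] sg by blast
      qed
    qed
  qed
qed


end
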